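(* There is an absolute constant $c>0$ such that, as $n\to\infty$, the fraction of all $2^{n2^n}$ operators $f:\{0,1\}^n\to\{0,1\}^n$ that satisfy $\mathrm{s}(f)\ge c\,n^2$ tends to $1$. In short: for almost all $n$-operators $f$, $\mathrm{s}(f)=\Omega(n^2)$.
   Context: An $n$-operator is a map $f=(f_1,\dots,f_n):\{0,1\}^n\to\{0,1\}^n$. A (general) circuit is a directed acyclic graph with $n$ input nodes $x_1,\dots,x_n$ (of fanin $0$) and $n$ designated output nodes $y_1,\dots,y_n$. Each non-input node may compute an arbitrary boolean function of the values at its in-neighbours, and there is no restriction on fanin or fanout. The circuit computes $f$ if, for every $i$, the function computed at $y_i$ is $f_i$. The size of a circuit is its total number of wires (edges). $\mathrm{s}(f)$ denotes the minimum size of a circuit computing $f$, with no restriction on depth. *)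

theory Defs
  imports Complex_Main
begin

text \<open>A general circuit with n inputs is given by: a number N of nodes (nodes 0..n-1 are
the inputs x_1..x_n, nodes n..N-1 are gates, numbered in a topological order, which is no
loss of generality for a DAG); for each gate v the list P v of its distinct in-neighbours
(all smaller than v); an arbitrary boolean function G v applied to the values of the
in-neighbours (in the order of P v); and an output map out, out i being the node y_(i+1).\<close>

fun node_vals :: "nat \<Rightarrow> (nat \<Rightarrow> nat list) \<Rightarrow> (nat \<Rightarrow> bool list \<Rightarrow> bool)
    \<Rightarrow> bool list \<Rightarrow> nat \<Rightarrow> bool list" where
  "node_vals n P G x 0 = []"
| "node_vals n P G x (Suc k) =
     (let vs = node_vals n P G x k
      in vs @ [if k < n then x ! k else G k (map (\<lambda>u. vs ! u) (P k))])"

definition valid_circuit :: "nat \<Rightarrow> nat \<Rightarrow> (nat \<Rightarrow> nat list) \<Rightarrow> (nat \<Rightarrow> nat) \<Rightarrow> bool" where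
  "valid_circuit n N P out \<longleftrightarrow>
     n \<le> N \<and>
     (\<forall>v. n \<le> v \<and> v < N \<longrightarrow> distinct (P v) \<and> (\<forall>u\<in>set (P v). u < v)) \<and>
     (\<forall>i<n. out i < N)"

definition circuit_size :: "nat \<Rightarrow> nat \<Rightarrow> (nat \<Rightarrow> nat list) \<Rightarrow> nat" where
  "circuit_size n N P = (\<Sum>v\<in>{n..<N}. length (P v))"

text \<open>n-operators f : {0,1}^n -> {0,1}^n, represented extensionally as functions on
bool lists (arguments of length n map to results of length n, everything else to []).\<close>
definition operators :: "nat \<Rightarrow> (bool list \<Rightarrow> bool list) set" where
  "operators n = {F. (\<forall>x. length x = n \<longrightarrow> length (F x) = n) \<and>
                     (\<forall>x. length x \<noteq> n \<longrightarrow> F x = [])}"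

definition computes :: "nat \<Rightarrow> nat \<Rightarrow> (nat \<Rightarrow> nat list) \<Rightarrow> (nat \<Rightarrow> bool list \<Rightarrow> bool)
    \<Rightarrow> (nat \<Rightarrow> nat) \<Rightarrow> (bool list \<Rightarrow> bool list) \<Rightarrow> bool" where
  "computes n N P G out F \<longleftrightarrow> valid_circuit n N P out \<and>
     (\<forall>x. length x = n \<longrightarrow> (\<forall>i<n. node_vals n P G x N ! (out i) = F x ! i))"

definition circ_complexity :: "nat \<Rightarrow> (bool list \<Rightarrow> bool list) \<Rightarrow> nat" where
  "circ_complexity n F =
     (LEAST m. \<exists>N P G out. computes n N P G out F \<and> circuit_size n N P = m)"

end

theory Submission
  imports Defs "HOL-Library.FuncSet" "HOL-Real_Asymp.Real_Asymp"
begin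


lemma nv_len[simp]: "length (node_vals n P G x k) = k"
  by (induction k) (auto simp: Let_def)

lemma nv_stable: "v < k \<Longrightarrow> node_vals n P G x k ! v = node_vals n P G x (Suc v) ! v"
proof (induction k)
  case 0 then show ?case by simp
next
  case (Suc k)
  show ?case
  proof (cases "v < k")
    case True then show ?thesis using Suc by (simp add: Let_def nth_append)
  next
    case False then have "v = k" using Suc by simp
    then show ?thesis by simp
  qed
qed

lemma nv_Suc: "node_vals n P G x (Suc v) ! v =
   (if v < n then x ! v else G v (map (\<lambda>u. node_vals n P G x v ! u) (P v)))"
  by (simp add: Let_def nth_append)

lemma nv_input: "u < n \<Longrightarrow> u < k \<Longrightarrow> node_vals n P G x k ! u = x ! u"
  using nv_stable[of u k] nv_Suc[of n P G x u] by simp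

lemma exists_circuit:
  assumes F: "F \<in> operators n"
  shows "\<exists>N P G out. computes n N P G out F"
proof -
  define P :: "nat \<Rightarrow> nat list" where "P = (\<lambda>v. [0..<n])"
  define G where "G = (\<lambda>v ys. F ys ! (v - n))"
  define out where "out = (\<lambda>i::nat. n + i)"
  have "valid_circuit n (n+n) P out" unfolding valid_circuit_def P_def out_def by auto
  moreover have "\<forall>x. length x = n \<longrightarrow> (\<forall>i<n. node_vals n P G x (n+n) ! (out i) = F x ! i)"
  proof (intro allI impI)
    fix x :: "bool list" and i assume x: "length x = n" and i: "i < n"
    have "node_vals n P G x (n+n) ! (out i) = node_vals n P G x (Suc (n+i)) ! (n+i)"
      using nv_stable[of "n+i" "n+n"] i by (simp add: out_def)
    also have "\<dots> = G (n+i) (map (\<lambda>u. node_vals n P G x (n+i) ! u) [0..<n])"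
      using nv_Suc[of n P G x "n+i"] by (simp add: P_def del: node_vals.simps)
    also have "map (\<lambda>u. node_vals n P G x (n+i) ! u) [0..<n] = x"
      using x by (intro nth_equalityI) (auto simp: nv_input)
    finally show "node_vals n P G x (n+n) ! (out i) = F x ! i" by (simp add: G_def)
  qed
  ultimately show ?thesis unfolding computes_def by blast
qed

definition nz :: "nat \<Rightarrow> (bool list \<Rightarrow> bool) \<Rightarrow> bool list \<Rightarrow> bool" where
  "nz n g = (\<lambda>x. if length x = n then g x else False)"

definition basefs :: "nat \<Rightarrow> (bool list \<Rightarrow> bool) set" where
  "basefs n = (\<lambda>i. nz n (\<lambda>x. x ! i)) ` {..<n} \<union> {nz n (\<lambda>_. True), nz n (\<lambda>_. False)}"

inductive reach :: "nat \<Rightarrow> (bool list \<Rightarrow> bool) set \<Rightarrow> nat \<Rightarrow> bool" for n where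
  r0: "reach n (basefs n) 0"
| rs: "reach n A c \<Longrightarrow> set Ls \<subseteq> A \<Longrightarrow> Ls \<noteq> [] \<Longrightarrow>
      reach n (insert (nz n (\<lambda>x. h (map (\<lambda>f. f x) Ls))) A) (c + length Ls)"

definition Phi :: "nat \<Rightarrow> (bool list \<Rightarrow> bool) list \<Rightarrow> bool list \<Rightarrow> bool list" where
  "Phi n fs = (\<lambda>x. if length x = n then map (\<lambda>f. f x) fs else [])"

lemma circuit_reach:
  assumes C: "computes n N P G out F" and F: "F \<in> operators n"
  shows "\<exists>A fs. reach n A (circuit_size n N P) \<and> set fs \<subseteq> A \<and> length fs = n \<and> F = Phi n fs"
proof -
  have V: "valid_circuit n N P out" and Fc: "\<And>x i. length x = n \<Longrightarrow> i < n \<Longrightarrow> node_vals n P G x N ! (out i) = F x ! i"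
    using C unfolding computes_def by auto
  have nN: "n \<le> N" and Pv: "\<And>v. n \<le> v \<Longrightarrow> v < N \<Longrightarrow> \<forall>u\<in>set (P v). u < v"
    and outN: "\<And>i. i < n \<Longrightarrow> out i < N"
    using V unfolding valid_circuit_def by auto
  define val where "val = (\<lambda>v x. node_vals n P G x N ! v)"
  define nf where "nf = (\<lambda>v. nz n (val v))"
  define AA where "AA = (\<lambda>k. basefs n \<union> nf ` {..<k})"
  have step: "val k x = G k (map (\<lambda>u. val u x) (P k))" if "n \<le> k" "k < N" for k x
  proof -
    have "val k x = node_vals n P G x (Suc k) ! k" using nv_stable[of k N] that by (simp add: val_def)
    also have "\<dots> = G k (map (\<lambda>u. node_vals n P G x k ! u) (P k))"
      using nv_Suc[of n P G x k] that by (simp del: node_vals.simps)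
    also have "map (\<lambda>u. node_vals n P G x k ! u) (P k) = map (\<lambda>u. val u x) (P k)"
    proof (rule map_cong[OF refl])
      fix u assume "u \<in> set (P k)"
      then have "u < k" using Pv that by auto
      then show "node_vals n P G x k ! u = val u x"
        using nv_stable[of u k] nv_stable[of u N] that by (simp add: val_def)
    qed
    finally show ?thesis .
  qed
  have inp: "nf v = nz n (\<lambda>x. x ! v)" if "v < n" for v
    using that nN nv_input[of v n N] by (auto simp: nf_def nz_def val_def)
  have main: "reach n (AA (n + d)) (\<Sum>v\<in>{n..<n+d}. length (P v))" if "n + d \<le> N" for d
    using that
  proof (induction d)
    case 0
    have "AA n = basefs n" unfolding AA_def basefs_def using inp by auto
    then show ?case by (simp add: r0)
  next
    case (Suc d)
    define k where "k = n + d"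
    have kN: "k < N" "n \<le> k" using Suc.prems by (auto simp: k_def)
    have IH: "reach n (AA k) (\<Sum>v\<in>{n..<k}. length (P v))" using Suc by (simp add: k_def)
    have AAS: "AA (n + Suc d) = insert (nf k) (AA k)" by (auto simp: AA_def k_def lessThan_Suc)
    have sumS: "(\<Sum>v\<in>{n..<n + Suc d}. length (P v)) = (\<Sum>v\<in>{n..<k}. length (P v)) + length (P k)"
      by (simp add: k_def)
    show ?case
    proof (cases "P k = []")
      case True
      then have "nf k = nz n (\<lambda>_. G k [])" using step[OF kN(2) kN(1)]
        by (auto simp: nf_def nz_def)
      then have "nf k \<in> basefs n" unfolding basefs_def by (cases "G k []") auto
      then have "AA (n + Suc d) = AA k" using AAS by (auto simp: AA_def)
      then show ?thesis using IH sumS True by simp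
    next
      case False
      have sub: "set (map nf (P k)) \<subseteq> AA k" using Pv[OF kN(2) kN(1)] by (auto simp: AA_def)
      have "nf k = nz n (\<lambda>x. G k (map (\<lambda>f. f x) (map nf (P k))))"
        using step[OF kN(2) kN(1)] by (auto simp: nf_def nz_def o_def)
      then have "reach n (AA (n + Suc d)) ((\<Sum>v\<in>{n..<k}. length (P v)) + length (map nf (P k)))"
        using rs[OF IH sub, of "G k"] False AAS by simp
      then show ?thesis using sumS by simp
    qed
  qed
  from main[of "N - n"] nN have R: "reach n (AA N) (circuit_size n N P)"
    by (simp add: circuit_size_def)
  define fs where "fs = map (\<lambda>i. nf (out i)) [0..<n]"
  have "set fs \<subseteq> AA N" using outN by (auto simp: fs_def AA_def)
  moreover have "F = Phi n fs"
  proof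
    fix x show "F x = Phi n fs x"
    proof (cases "length x = n")
      case True
      then have "length (F x) = n" using F by (simp add: operators_def)
      then show ?thesis using True Fc
        by (intro nth_equalityI) (auto simp: Phi_def fs_def nf_def nz_def val_def)
    next
      case False then show ?thesis using F by (simp add: operators_def Phi_def)
    qed
  qed
  moreover have "length fs = n" by (simp add: fs_def)
  ultimately show ?thesis using R by blast
qed



lemma geo_sum: "(\<Sum>k\<in>{1..c}. (2*Y)^(c-k) * Y^k) + Y^c \<le> (2*(Y::nat))^c"
proof (induction c)
  case 0 then show ?case by simp
next
  case (Suc c)
  have "(\<Sum>k\<in>{1..Suc c}. (2*Y)^(Suc c-k) * Y^k) = (\<Sum>k\<in>{1..c}. (2*Y)^(Suc c-k) * Y^k) + Y^Suc c"
    by simp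
  also have "(\<Sum>k\<in>{1..c}. (2*Y)^(Suc c-k) * Y^k) = (2*Y) * (\<Sum>k\<in>{1..c}. (2*Y)^(c-k) * Y^k)"
    by (simp add: sum_distrib_left Suc_diff_le mult.assoc)
  finally have "(\<Sum>k\<in>{1..Suc c}. (2*Y)^(Suc c-k) * Y^k) + Y^Suc c
      = (2*Y) * ((\<Sum>k\<in>{1..c}. (2*Y)^(c-k) * Y^k) + Y^c)" by (simp add: algebra_simps)
  also have "\<dots> \<le> (2*Y) * (2*Y)^c" using Suc by simp
  finally show ?case by simp
qed

lemma pow_ineq: assumes "1 \<le> k" "k \<le> n" shows "n * 2^k \<le> k * (2::nat)^n"
  using assms(2)
proof (induction n rule: dec_induct)
  case base then show ?case by simp
next
  case (step m)
  have "Suc m * 2^k \<le> 2 * (m * 2^k)" using step assms by simp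
  also have "\<dots> \<le> 2 * (k * 2^m)" using step by simp
  finally show ?case by simp
qed

lemma min_bound: assumes "1 \<le> n" "1 \<le> k"
  shows "min (2^k) (2^n) \<le> k * (2^n div n + (1::nat))"
proof -
  have na: "2^n \<le> n * (2^n div n + 1)"
  proof -
    have e: "n * (2^n div n) + 2^n mod n = (2::nat)^n" by (rule mult_div_mod_eq)
    have m: "2^n mod n < n" using assms by simp
    have "2^n \<le> n * (2^n div n) + n" using e m by linarith
    then show ?thesis by (simp add: algebra_simps)
  qed
  show ?thesis
  proof (cases "k \<le> n")
    case True
    have "n * 2^k \<le> k * 2^n" using pow_ineq[OF assms(2) True] .
    also have "\<dots> \<le> k * (n * (2^n div n + 1))" using na by simp
    finally have "n * 2^k \<le> n * (k * (2^n div n + 1))" by (simp add: algebra_simps)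
    then have "2^k \<le> k * (2^n div n + 1)" using assms by simp
    then show ?thesis by simp
  next
    case False
    have "2^n \<le> n * (2^n div n + 1)" by (rule na)
    also have "\<dots> \<le> k * (2^n div n + 1)" using False by (intro mult_right_mono) auto
    finally show ?thesis by simp
  qed
qed

definition compf :: "nat \<Rightarrow> (bool list \<Rightarrow> bool) list \<Rightarrow> (bool list \<Rightarrow> bool) set" where
  "compf n Ls = range (\<lambda>h. nz n (\<lambda>x. h (map (\<lambda>f. f x) Ls)))"

lemma compf_card:
  assumes "1 \<le> n" "Ls \<noteq> []"
  shows "finite (compf n Ls) \<and> card (compf n Ls) \<le> (2 ^ (2^n div n + 1)) ^ length Ls"
proof -
  define phi where "phi = (\<lambda>x. map (\<lambda>f. f x) Ls)"
  define U where "U = {x::bool list. length x = n}"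
  define Y where "Y = phi ` U"
  have UL: "finite U" "card U = 2^n" unfolding U_def
    using finite_lists_length_eq[of "UNIV::bool set" n] card_lists_length_eq[of "UNIV::bool set" n]
    by auto
  have YL: "Y \<subseteq> {xs. set xs \<subseteq> (UNIV::bool set) \<and> length xs = length Ls}"
    by (auto simp: Y_def phi_def)
  have fY: "finite Y" using UL by (simp add: Y_def)
  have cY1: "card Y \<le> 2^n" using UL card_image_le[of U phi] by (simp add: Y_def)
  have "card Y \<le> card {xs. set xs \<subseteq> (UNIV::bool set) \<and> length xs = length Ls}"
    using YL by (intro card_mono) (auto intro: finite_lists_length_eq[of UNIV, simplified])
  then have cY2: "card Y \<le> 2 ^ length Ls" using card_lists_length_eq[of "UNIV::bool set" "length Ls"]
    by simp
  have sub: "compf n Ls \<subseteq> (\<lambda>h. nz n (\<lambda>x. h (phi x))) ` (Pi\<^sub>E Y (\<lambda>_. UNIV))"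
  proof
    fix g assume "g \<in> compf n Ls"
    then obtain h where g: "g = nz n (\<lambda>x. h (phi x))" by (auto simp: compf_def phi_def)
    have "g = nz n (\<lambda>x. restrict h Y (phi x))"
      unfolding g nz_def by (intro ext) (simp add: Y_def U_def)
    moreover have "restrict h Y \<in> Pi\<^sub>E Y (\<lambda>_. UNIV)" by simp
    ultimately show "g \<in> (\<lambda>h. nz n (\<lambda>x. h (phi x))) ` (Pi\<^sub>E Y (\<lambda>_. UNIV))" by blast
  qed
  have fP: "finite (Pi\<^sub>E Y (\<lambda>_. UNIV::bool set))" using fY by (simp add: finite_PiE)
  have cP: "card (Pi\<^sub>E Y (\<lambda>_. UNIV::bool set)) = 2 ^ card Y" using fY by (simp add: card_PiE)
  have fin: "finite (compf n Ls)" using sub fP finite_subset by blast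
  have "card (compf n Ls) \<le> card ((\<lambda>h. nz n (\<lambda>x. h (phi x))) ` (Pi\<^sub>E Y (\<lambda>_. UNIV::bool set)))"
    using sub fP by (intro card_mono) auto
  also have "\<dots> \<le> 2 ^ card Y" using card_image_le[OF fP] cP by simp
  also have "card Y \<le> min (2 ^ length Ls) (2^n)" using cY1 cY2 by simp
  then have "(2::nat) ^ card Y \<le> 2 ^ (length Ls * (2^n div n + 1))"
    using min_bound[OF assms(1), of "length Ls"] assms(2)
    by (intro power_increasing) (auto simp: Suc_le_eq)
  also have "\<dots> = (2 ^ (2^n div n + 1)) ^ length Ls" by (metis power_mult mult.commute)
  finally show ?thesis using fin by simp
qed

lemma reach_card: "reach n A c \<Longrightarrow> finite A \<and> card A \<le> n + 2 + c"
proof (induction rule: reach.induct)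
  case r0
  have "card (basefs n) \<le> card ((\<lambda>i. nz n (\<lambda>x. x ! i)) ` {..<n}) + card {nz n (\<lambda>_. True), nz n (\<lambda>_. False)}"
    unfolding basefs_def by (rule card_Un_le)
  also have "\<dots> \<le> n + 2" using card_image_le[of "{..<n}" "\<lambda>i. nz n (\<lambda>x. x ! i)"]
    by (intro add_mono) (auto simp: card_insert_if)
  finally show ?case by (simp add: basefs_def)
next
  case (rs A c Ls h)
  then show ?case by (cases Ls) (auto simp: card_insert_if)
qed



lemma reach_count:
  assumes n1: "1 \<le> n"
  shows "c \<le> s \<Longrightarrow> finite {A. reach n A c} \<and>
     card {A. reach n A c} \<le> (2 * ((n+2+s) * 2^(2^n div n + 1)))^c"
proof (induction c rule: less_induct)
  case (less c)
  define Q :: nat where "Q = 2^(2^n div n + 1)"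
  define M where "M = n+2+s"
  define Y where "Y = M * Q"
  define SS where "SS = (\<lambda>c. {A. reach n A c})"
  define LL where "LL = (\<lambda>(A::(bool list \<Rightarrow> bool) set) k. {Ls. set Ls \<subseteq> A \<and> length Ls = k})"
  define E where "E = (\<lambda>k. \<Union>A\<in>SS (c-k). \<Union>Ls\<in>LL A k. (\<lambda>g. insert g A) ` compf n Ls)"
  define D where "D = (if c = 0 then {basefs n} else {}) \<union> (\<Union>k\<in>{1..c}. E k)"
  have IH: "finite (SS (c-k)) \<and> card (SS (c-k)) \<le> (2*Y)^(c-k)" if "k \<in> {1..c}" for k
    using less.IH[of "c-k"] that less.prems by (auto simp: SS_def Y_def M_def Q_def)
  have sub: "SS c \<subseteq> D"
  proof
    fix A assume "A \<in> SS c"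
    then have "reach n A c" by (simp add: SS_def)
    then show "A \<in> D"
    proof (cases rule: reach.cases)
      case r0 then show ?thesis by (simp add: D_def)
    next
      case (rs A' c' Ls h)
      define k where "k = length Ls"
      have k: "k \<in> {1..c}" using rs by (cases Ls) (auto simp: k_def)
      have "A' \<in> SS (c-k)" using rs by (simp add: SS_def k_def)
      moreover have "Ls \<in> LL A' k" using rs by (simp add: LL_def k_def)
      moreover have "nz n (\<lambda>x. h (map (\<lambda>f. f x) Ls)) \<in> compf n Ls" by (simp add: compf_def)
      ultimately have "A \<in> E k" unfolding E_def using rs by blast
      then show ?thesis using k by (auto simp: D_def)
    qed
  qed
  have LLfin: "finite (LL A k) \<and> card (LL A k) \<le> M^k" if "A \<in> SS (c-k)" "k \<in> {1..c}" for A k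
  proof -
    have "finite A" "card A \<le> M" using reach_card[of n A "c-k"] that less.prems
      by (auto simp: SS_def M_def)
    then show ?thesis using finite_lists_length_eq[of A k] card_lists_length_eq[of A k]
      by (auto simp: LL_def power_mono)
  qed
  have Ek: "finite (E k) \<and> card (E k) \<le> (2*Y)^(c-k) * Y^k" if k: "k \<in> {1..c}" for k
  proof -
    have inner: "finite ((\<lambda>g. insert g A) ` compf n Ls) \<and> card ((\<lambda>g. insert g A) ` compf n Ls) \<le> Q^k"
      if "Ls \<in> LL A k" for A Ls
    proof -
      have "Ls \<noteq> []" "length Ls = k" using that k by (auto simp: LL_def)
      then have "finite (compf n Ls) \<and> card (compf n Ls) \<le> Q^k" using compf_card[OF n1] Q_def by auto
      then show ?thesis using card_image_le[of "compf n Ls" "\<lambda>g. insert g A"] by auto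
    qed
    have mid: "finite (\<Union>Ls\<in>LL A k. (\<lambda>g. insert g A) ` compf n Ls) \<and>
        card (\<Union>Ls\<in>LL A k. (\<lambda>g. insert g A) ` compf n Ls) \<le> M^k * Q^k" if A: "A \<in> SS (c-k)" for A
    proof -
      have f: "finite (LL A k)" "card (LL A k) \<le> M^k" using LLfin[OF A k] by auto
      have "card (\<Union>Ls\<in>LL A k. (\<lambda>g. insert g A) ` compf n Ls) \<le> (\<Sum>Ls\<in>LL A k. card ((\<lambda>g. insert g A) ` compf n Ls))"
        by (rule card_UN_le[OF f(1)])
      also have "\<dots> \<le> (\<Sum>Ls\<in>LL A k. Q^k)" using inner by (intro sum_mono) auto
      also have "\<dots> = card (LL A k) * Q^k" by simp
      also have "\<dots> \<le> M^k * Q^k" using f(2) by simp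
      finally show ?thesis using inner f(1) by auto
    qed
    have fS: "finite (SS (c-k))" "card (SS (c-k)) \<le> (2*Y)^(c-k)" using IH[OF k] by auto
    have "card (E k) \<le> (\<Sum>A\<in>SS (c-k). card (\<Union>Ls\<in>LL A k. (\<lambda>g. insert g A) ` compf n Ls))"
      unfolding E_def by (rule card_UN_le[OF fS(1)])
    also have "\<dots> \<le> (\<Sum>A\<in>SS (c-k). M^k * Q^k)" using mid by (intro sum_mono) auto
    also have "\<dots> = card (SS (c-k)) * Y^k" by (simp add: Y_def power_mult_distrib)
    also have "\<dots> \<le> (2*Y)^(c-k) * Y^k" using fS(2) by simp
    finally show ?thesis using mid fS(1) by (auto simp: E_def)
  qed
  have finD: "finite D" using Ek by (auto simp: D_def)
  have "card D \<le> card (if c = 0 then {basefs n} else {}) + card (\<Union>k\<in>{1..c}. E k)"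
    unfolding D_def by (rule card_Un_le)
  also have "card (\<Union>k\<in>{1..c}. E k) \<le> (\<Sum>k\<in>{1..c}. card (E k))" by (rule card_UN_le) simp
  also have "\<dots> \<le> (\<Sum>k\<in>{1..c}. (2*Y)^(c-k) * Y^k)" using Ek by (intro sum_mono) auto
  finally have cD: "card D \<le> card (if c = 0 then {basefs n} else {}) + (\<Sum>k\<in>{1..c}. (2*Y)^(c-k) * Y^k)"
    by simp
  have "card D \<le> (2*Y)^c"
  proof (cases "c = 0")
    case True then show ?thesis using cD by simp
  next
    case False
    then have "card D \<le> (\<Sum>k\<in>{1..c}. (2*Y)^(c-k) * Y^k)" using cD by simp
    also have "\<dots> \<le> (2*Y)^c" using geo_sum[where c=c and Y=Y] by linarith
    finally show ?thesis .
  qed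
  then have "card (SS c) \<le> (2*Y)^c" using card_mono[OF finD sub] by simp
  moreover have "finite (SS c)" using finD sub finite_subset by blast
  ultimately show ?case by (simp add: SS_def Y_def M_def Q_def)
qed



lemma ops_card: "finite (operators n) \<and> card (operators n) = 2^(n*2^n)"
proof -
  define U where "U = {x::bool list. length x = n}"
  define Psi where "Psi = (\<lambda>h::bool list \<Rightarrow> bool list. \<lambda>x. if length x = n then h x else [])"
  have fU: "finite U" "card U = 2^n" unfolding U_def
    using finite_lists_length_eq[of "UNIV::bool set" n] card_lists_length_eq[of "UNIV::bool set" n]
    by auto
  have eq: "operators n = Psi ` (Pi\<^sub>E U (\<lambda>_. U))"
  proof
    show "operators n \<subseteq> Psi ` (Pi\<^sub>E U (\<lambda>_. U))"
    proof
      fix F assume F: "F \<in> operators n"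
      have "F = Psi (restrict F U)"
        using F by (auto simp: Psi_def operators_def U_def)
      moreover have "restrict F U \<in> Pi\<^sub>E U (\<lambda>_. U)" using F by (auto simp: operators_def U_def)
      ultimately show "F \<in> Psi ` (Pi\<^sub>E U (\<lambda>_. U))" by blast
    qed
  next
    show "Psi ` (Pi\<^sub>E U (\<lambda>_. U)) \<subseteq> operators n"
      by (auto simp: Psi_def operators_def U_def PiE_def Pi_def)
  qed
  have inj: "inj_on Psi (Pi\<^sub>E U (\<lambda>_. U))"
  proof (rule inj_onI)
    fix h1 h2 assume h: "h1 \<in> Pi\<^sub>E U (\<lambda>_. U)" "h2 \<in> Pi\<^sub>E U (\<lambda>_. U)" "Psi h1 = Psi h2"
    show "h1 = h2"
    proof
      fix x show "h1 x = h2 x"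
      proof (cases "x \<in> U")
        case True then show ?thesis using fun_cong[OF h(3), of x] by (simp add: Psi_def U_def)
      next
        case False then show ?thesis using h(1,2) by (simp add: PiE_def extensional_def)
      qed
    qed
  qed
  have "card (operators n) = card (Pi\<^sub>E U (\<lambda>_. U))" using eq inj card_image by metis
  also have "\<dots> = (2^n)^(2^n)" using fU by (simp add: card_PiE)
  also have "\<dots> = 2^(n*2^n)" by (simp add: power_mult)
  finally show ?thesis using eq fU by (simp add: finite_PiE)
qed

lemma low_bound:
  assumes n1: "1 \<le> n"
  shows "card {F \<in> operators n. \<not> (1/2 * real n ^ 2 \<le> real (circ_complexity n F))}
     \<le> (n^2 div 2 + 1) * (2 * ((n+2+n^2 div 2) * 2^(2^n div n + 1)))^(n^2 div 2) * (n+2+n^2 div 2)^n"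
proof -
  define s0 where "s0 = n^2 div 2"
  define M where "M = n+2+s0"
  define Y where "Y = M * 2^(2^n div n + 1)"
  define LL where "LL = (\<lambda>(A::(bool list \<Rightarrow> bool) set). {Ls. set Ls \<subseteq> A \<and> length Ls = n})"
  define T where "T = (\<Union>c\<in>{..s0}. \<Union>A\<in>{A. reach n A c}. LL A)"
  have sub: "{F \<in> operators n. \<not> (1/2 * real n ^ 2 \<le> real (circ_complexity n F))} \<subseteq> Phi n ` T"
  proof
    fix F assume "F \<in> {F \<in> operators n. \<not> (1/2 * real n ^ 2 \<le> real (circ_complexity n F))}"
    then have F: "F \<in> operators n" and lt: "real (circ_complexity n F) < 1/2 * real n ^ 2" by auto
    have "2 * circ_complexity n F < n^2"
    proof -
      have "real (2 * circ_complexity n F) < real (n^2)" using lt by simp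
      then show ?thesis by (simp only: of_nat_less_iff)
    qed
    then have le: "circ_complexity n F \<le> s0" unfolding s0_def by linarith
    obtain N P G out where "computes n N P G out F" using exists_circuit[OF F] by blast
    then have "\<exists>m. \<exists>N P G out. computes n N P G out F \<and> circuit_size n N P = m" by blast
    then have "\<exists>N P G out. computes n N P G out F \<and> circuit_size n N P = circ_complexity n F"
      unfolding circ_complexity_def by (rule LeastI_ex)
    then obtain N P G out where C: "computes n N P G out F" and sz: "circuit_size n N P = circ_complexity n F"
      by blast
    obtain A fs where "reach n A (circuit_size n N P)" "set fs \<subseteq> A" "length fs = n" "F = Phi n fs"
      using circuit_reach[OF C F] by blast
    then have r: "reach n A (circ_complexity n F)" and fs: "fs \<in> LL A" and Fe: "F = Phi n fs"
      using sz by (auto simp: LL_def)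
    have "fs \<in> T" unfolding T_def
      using le r fs by (intro UN_I[of "circ_complexity n F"]) auto
    then show "F \<in> Phi n ` T" using Fe by (intro image_eqI[of _ _ fs])
  qed
  have cnt: "finite {A. reach n A c} \<and> card {A. reach n A c} \<le> (2*Y)^c" if "c \<le> s0" for c
    using reach_count[OF n1 that] by (simp add: Y_def M_def)
  have LLb: "finite (LL A) \<and> card (LL A) \<le> M^n" if "reach n A c" "c \<le> s0" for A c
  proof -
    have "finite A" "card A \<le> M" using reach_card[OF that(1)] that(2) by (auto simp: M_def)
    then show ?thesis using finite_lists_length_eq[of A n] card_lists_length_eq[of A n]
      by (auto simp: LL_def power_mono)
  qed
  have inner: "finite (\<Union>A\<in>{A. reach n A c}. LL A) \<and> card (\<Union>A\<in>{A. reach n A c}. LL A) \<le> (2*Y)^s0 * M^n"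
    if c: "c \<in> {..s0}" for c
  proof -
    have f: "finite {A. reach n A c}" "card {A. reach n A c} \<le> (2*Y)^c" using cnt c by auto
    have "card (\<Union>A\<in>{A. reach n A c}. LL A) \<le> (\<Sum>A\<in>{A. reach n A c}. card (LL A))"
      by (rule card_UN_le[OF f(1)])
    also have "\<dots> \<le> (\<Sum>A\<in>{A. reach n A c}. M^n)" using LLb c by (intro sum_mono) auto
    also have "\<dots> = card {A. reach n A c} * M^n" by simp
    also have "\<dots> \<le> (2*Y)^c * M^n" using f(2) by simp
    also have "\<dots> \<le> (2*Y)^s0 * M^n"
    proof -
      have "Y \<ge> 1" by (simp add: Y_def M_def Suc_le_eq)
      then have "(2*Y)^c \<le> (2*Y)^s0" using c by (intro power_increasing) auto
      then show ?thesis by simp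
    qed
    finally show ?thesis using f(1) LLb c by auto
  qed
  have finT: "finite T" unfolding T_def using inner by (intro finite_UN_I[of "{..s0}"]) auto
  have "card (Phi n ` T) \<le> card T" by (rule card_image_le[OF finT])
  also have "card T \<le> (\<Sum>c\<in>{..s0}. card (\<Union>A\<in>{A. reach n A c}. LL A))"
    unfolding T_def by (rule card_UN_le) simp
  also have "\<dots> \<le> (\<Sum>c\<in>{..s0}. (2*Y)^s0 * M^n)" using inner by (intro sum_mono) auto
  also have "\<dots> = (s0+1) * (2*Y)^s0 * M^n" by (simp add: algebra_simps)
  finally have "card (Phi n ` T) \<le> (s0+1) * (2*Y)^s0 * M^n" .
  moreover have "finite (Phi n ` T)" using finT by simp
  ultimately have "card {F \<in> operators n. \<not> (1/2 * real n ^ 2 \<le> real (circ_complexity n F))} \<le> (s0+1) * (2*Y)^s0 * M^n"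
    using card_mono[OF _ sub] le_trans by blast
  then show ?thesis by (simp only: s0_def M_def Y_def)
qed



lemma rdiv_le: assumes "0 < d" shows "real (m div d) \<le> real m / real d"
proof -
  have e: "m div d * d + m mod d = m" by (rule div_mult_mod_eq)
  have "m div d * d \<le> m" using e by linarith
  then have "real (m div d) * real d \<le> real m" by (metis of_nat_le_iff of_nat_mult)
  then show ?thesis using assms by (simp add: field_simps)
qed

lemma ratio_bound:
  assumes n1: "1 \<le> n"
  shows "real ((n^2 div 2 + 1) * (2 * ((n+2+n^2 div 2) * 2^(2^n div n + 1)))^(n^2 div 2) * (n+2+n^2 div 2)^n)
          / 2^(n*2^n)
     \<le> (real n^2+1) * (2*real n^2+2*real n+4) powr (real n^2+real n) * 2 powr (real n^2/2 - real n * 2 powr real n / 2)"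
proof -
  define s0 where "s0 = n^2 div 2"
  define M where "M = n+2+s0"
  define a where "a = 2^n div n + 1"
  define W :: nat where "W = 2*n^2+2*n+4"
  have eqB: "(s0 + 1) * (2 * (M * 2^a))^s0 * M^n = (s0+1) * ((2*M)^s0 * M^n) * 2^(a*s0)"
  proof -
    have "(2 * (M * 2^a))^s0 = (2*M)^s0 * (2::nat)^(a*s0)"
      by (simp only: power_mult mult.assoc[symmetric] power_mult_distrib)
    then show ?thesis by (simp only: ac_simps)
  qed
  have s0le: "s0 \<le> n^2" by (simp add: s0_def)
  have MW: "2*M \<le> W" using s0le by (simp add: M_def W_def)
  have "(2*M)^s0 * M^n \<le> (2*M)^s0 * (2*M)^n" by (intro mult_left_mono power_mono) auto
  also have "\<dots> = (2*M)^(s0+n)" by (simp add: power_add)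
  also have "\<dots> \<le> W^(s0+n)" using MW by (intro power_mono) auto
  also have "\<dots> \<le> W^(n^2+n)" using s0le by (intro power_increasing) (auto simp: W_def)
  finally have pw: "(2*M)^s0 * M^n \<le> W^(n^2+n)" .
  have s1: "s0 + 1 \<le> n^2+1" using s0le by simp
  have "(s0+1) * ((2*M)^s0 * M^n) \<le> (n^2+1) * W^(n^2+n)" using pw s1 by (intro mult_mono) auto
  then have "real ((s0+1) * ((2*M)^s0 * M^n)) \<le> real ((n^2+1) * W^(n^2+n))"
    by (simp only: of_nat_le_iff)
  also have "real ((n^2+1) * W^(n^2+n)) = (real n^2+1) * real W^(n^2+n)" by (simp add: distrib_right)
  finally have r1: "real ((s0+1) * ((2*M)^s0 * M^n)) \<le> (real n^2+1) * real W^(n^2+n)" .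
  have rs0: "real s0 \<le> real n^2/2" unfolding s0_def using rdiv_le[of 2 "n^2"] by simp
  have ra: "real a \<le> 2 powr real n / real n + 1"
    unfolding a_def using rdiv_le[of n "2^n"] n1 by (simp add: powr_realpow)
  have npos: "real n > 0" using n1 by simp
  have "real (a*s0) = real a * real s0" by simp
  also have "\<dots> \<le> (2 powr real n / real n + 1) * (real n^2/2)"
    using ra rs0 by (intro mult_mono) auto
  also have "\<dots> = real n * 2 powr real n / 2 + real n^2/2" using npos
    by (simp add: field_simps power2_eq_square)
  finally have aS: "real (a*s0) \<le> real n * 2 powr real n / 2 + real n^2/2" .
  have p2': "(2::real) powr real (a*s0) \<le> 2 powr (real n * 2 powr real n / 2 + real n^2/2)"
    using aS by (intro powr_mono) auto
  have "(2::real) powr real (a*s0) = 2^(a*s0)" by (rule powr_realpow) simp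
  then have p2: "(2::real)^(a*s0) \<le> 2 powr (real n * 2 powr real n / 2 + real n^2/2)"
    using p2' by simp
  have e2: "real n * 2 powr real n = real (n*2^n)" by (simp add: powr_realpow)
  have "(2::real) powr real (n*2^n) = 2^(n*2^n)" by (rule powr_realpow) simp
  then have den: "(2::real)^(n*2^n) = 2 powr (real n * 2 powr real n)"
    unfolding e2 by (rule sym)
  have "real ((s0 + 1) * (2 * (M * 2^a))^s0 * M^n) = real ((s0+1) * ((2*M)^s0 * M^n)) * 2^(a*s0)"
    by (simp only: eqB of_nat_mult of_nat_power) simp
  also have "\<dots> \<le> ((real n^2+1) * real W^(n^2+n)) * 2 powr (real n * 2 powr real n / 2 + real n^2/2)"
    using r1 p2 by (intro mult_mono) auto
  finally have num: "real ((s0 + 1) * (2 * (M * 2^a))^s0 * M^n) \<le> ((real n^2+1) * real W^(n^2+n)) * 2 powr (real n * 2 powr real n / 2 + real n^2/2)" .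
  have Wr: "real W ^ (n^2+n) = (2*real n^2+2*real n+4) powr (real n^2+real n)"
  proof -
    have w: "real W = 2*real n^2+2*real n+4" by (simp add: W_def)
    have "real W powr real (n^2+n) = real W ^ (n^2+n)" 
    proof -
      have "0 < W" by (simp add: W_def)
      then have "0 < real W" by simp
      then show ?thesis by (rule powr_realpow)
    qed
    moreover have "real (n^2+n) = real n^2 + real n" by simp
    ultimately show ?thesis using w by simp
  qed
  have "real ((s0 + 1) * (2 * (M * 2^a))^s0 * M^n) / 2^(n*2^n)
     \<le> ((real n^2+1) * real W^(n^2+n)) * 2 powr (real n * 2 powr real n / 2 + real n^2/2) / 2 powr (real n * 2 powr real n)"
    using num by (simp add: den divide_right_mono)
  also have "\<dots> = (real n^2+1) * real W^(n^2+n) * (2 powr (real n * 2 powr real n / 2 + real n^2/2) / 2 powr (real n * 2 powr real n))"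
    by simp
  also have "2 powr (real n * 2 powr real n / 2 + real n^2/2) / 2 powr (real n * 2 powr real n)
      = 2 powr (real n^2/2 - real n * 2 powr real n / 2)"
    by (simp add: powr_diff[symmetric])
  finally show ?thesis using Wr by (simp add: s0_def M_def a_def)
qed

lemma hlim: "(\<lambda>n::nat. (real n^2+1) * (2*real n^2+2*real n+4) powr (real n^2+real n) * 2 powr (real n^2/2 - real n * 2 powr real n / 2)) \<longlonglongrightarrow> 0"
  by real_asymp

theorem theorem1:
  shows "\<exists>c::real. c > 0 \<and>
    (\<lambda>n. real (card {F \<in> operators n. real (circ_complexity n F) \<ge> c * real n ^ 2})
          / real (card (operators n))) \<longlonglongrightarrow> 1"
proof (intro exI conjI)
  show "(1/2::real) > 0" by simp
  define hi where "hi = (\<lambda>n. {F \<in> operators n. real (circ_complexity n F) \<ge> 1/2 * real n ^ 2})"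
  define lo where "lo = (\<lambda>n. {F \<in> operators n. \<not> (1/2 * real n ^ 2 \<le> real (circ_complexity n F))})"
  define h where "h = (\<lambda>n::nat. (real n^2+1) * (2*real n^2+2*real n+4) powr (real n^2+real n) * 2 powr (real n^2/2 - real n * 2 powr real n / 2))"
  have split: "real (card (hi n)) / real (card (operators n)) = 1 - real (card (lo n)) / real (card (operators n))" for n
  proof -
    have fin: "finite (operators n)" and cp: "card (operators n) = 2^(n*2^n)" using ops_card by auto
    have "operators n = hi n \<union> lo n" "hi n \<inter> lo n = {}" by (auto simp: hi_def lo_def)
    then have "card (operators n) = card (hi n) + card (lo n)"
      using fin by (metis card_Un_disjoint finite_Un)
    moreover have "card (operators n) > 0" using cp by simp
    ultimately have d: "real (card (operators n)) = real (card (hi n)) + real (card (lo n))"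
      and dp: "real (card (operators n)) > 0" by (simp, simp only: of_nat_0_less_iff)
    have "1 - real (card (lo n)) / real (card (operators n)) = (real (card (operators n)) - real (card (lo n))) / real (card (operators n))"
      using dp by (simp add: diff_divide_distrib)
    then show ?thesis using d by simp
  qed
  have lo0: "(\<lambda>n. real (card (lo n)) / real (card (operators n))) \<longlonglongrightarrow> 0"
  proof (rule tendsto_sandwich[of "\<lambda>_. 0" _ sequentially h])
    show "\<forall>\<^sub>F n in sequentially. 0 \<le> real (card (lo n)) / real (card (operators n))" by simp
    show "\<forall>\<^sub>F n in sequentially. real (card (lo n)) / real (card (operators n)) \<le> h n"
      unfolding eventually_sequentially
    proof (intro exI allI impI)
      fix n :: nat assume n1: "1 \<le> n"
      have cp: "real (card (operators n)) = 2^(n*2^n)" using ops_card by simp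
      have "real (card (lo n)) \<le> real ((n^2 div 2 + 1) * (2 * ((n+2+n^2 div 2) * 2^(2^n div n + 1)))^(n^2 div 2) * (n+2+n^2 div 2)^n)"
        using low_bound[OF n1] unfolding lo_def by (simp only: of_nat_le_iff)
      then have "real (card (lo n)) / real (card (operators n)) \<le> real ((n^2 div 2 + 1) * (2 * ((n+2+n^2 div 2) * 2^(2^n div n + 1)))^(n^2 div 2) * (n+2+n^2 div 2)^n) / 2^(n*2^n)"
        unfolding cp by (rule divide_right_mono) simp
      also have "\<dots> \<le> h n" unfolding h_def by (rule ratio_bound[OF n1])
      finally show "real (card (lo n)) / real (card (operators n)) \<le> h n" .
    qed
    show "(\<lambda>_. 0::real) \<longlonglongrightarrow> 0" by simp
    show "h \<longlonglongrightarrow> 0" unfolding h_def by (rule hlim)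
  qed
  have "(\<lambda>n. 1 - real (card (lo n)) / real (card (operators n))) \<longlonglongrightarrow> 1 - 0"
    by (intro tendsto_diff tendsto_const lo0)
  then show "(\<lambda>n. real (card {F \<in> operators n. real (circ_complexity n F) \<ge> 1/2 * real n ^ 2})
          / real (card (operators n))) \<longlonglongrightarrow> 1"
    using split by (simp add: hi_def)
qed

end
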